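(* Let $\Sigma$ and $\Gamma$ be finite alphabets, each with at least two letters, let $a,b\in\Sigma$ be distinct letters, and let $w \in \{a,b\}^+$. The following are equivalent: 1. $\mathrm{E}_{\mathcal{I}}(w) = \infty$. 2. $\mathrm{E}_{\mathcal{I}}(w) > |w|$. 3. There exist integers $k, j_1, j_2, j_3 \ge 0$ such that $w = b^{j_1} (a b^{j_2})^k a b^{j_3}$ or $w = a^{j_1} (b a^{j_2})^k b a^{j_3}$.
   Context: For a nonempty word $v$ and integer $p\ge 0$, $v^{p/|v|}$ denotes the prefix of length $p$ of $vvv\cdots$. For a nonempty finite word $u$, $\mathrm{E}(u) = \sup\{ r \in \mathbb{Q} : u = v^r \text{ for some nonempty word } v\}$. $\mathcal{I}$ is the set of injective morphisms $\Sigma^* \to \Gamma^*$, and $\mathrm{E}_{\mathcal{I}}(w) = \sup\{\mathrm{E}(h(w)) : h \in \mathcal{I}\}$. *)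

theory Defs
  imports Complex_Main "HOL-Library.Extended_Real"
begin

text \<open>Finite words are lists. For a nonempty word v and p \<ge> 0,
  wpow v p is the prefix of length p of vvv..., i.e. v^(p/|v|).\<close>
definition wpow :: "'a list \<Rightarrow> nat \<Rightarrow> 'a list" where
  "wpow v p = map (\<lambda>i. v ! (i mod length v)) [0..<p]"

definition word_exp :: "'a list \<Rightarrow> ereal" where
  "word_exp u = Sup {ereal (real_of_rat r) | r v p.
       v \<noteq> [] \<and> r = of_nat p / of_nat (length v) \<and> u = wpow v p}"

definition morph :: "('a \<Rightarrow> 'b list) \<Rightarrow> 'a list \<Rightarrow> 'b list" where
  "morph f w = concat (map f w)"

definition inj_morphs :: "('a \<Rightarrow> 'b list) set" where
  "inj_morphs = {f. inj (morph f)}"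

definition exp_I :: "('a \<Rightarrow> 'b list) set \<Rightarrow> 'a list \<Rightarrow> ereal" where
  "exp_I I w = (SUP f\<in>I. word_exp (morph f w))"

end

theory Submission
  imports Defs
begin


lemma morph_Nil[simp]: "morph f [] = []" by (simp add: morph_def)
lemma morph_Cons[simp]: "morph f (x#xs) = f x @ morph f xs" by (simp add: morph_def)
lemma morph_append[simp]: "morph f (xs@ys) = morph f xs @ morph f ys" by (simp add: morph_def)
lemma morph_replicate[simp]: "morph f (replicate n x) = concat (replicate n (f x))"
  by (induction n) auto
lemma morph_concat_rep[simp]: "morph f (concat (replicate k xs)) = concat (replicate k (morph f xs))"
  by (induction k) auto

lemma length_wpow[simp]: "length (wpow v p) = p" by (simp add: wpow_def)
lemma nth_wpow: "i < p \<Longrightarrow> wpow v p ! i = v ! (i mod length v)" by (simp add: wpow_def)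

lemma length_concat_rep[simp]: "length (concat (replicate n y)) = n * length y"
  by (induction n) auto

lemma nth_concat_rep: "j < n * length y \<Longrightarrow> concat (replicate n y) ! j = y ! (j mod length y)"
proof (induction n arbitrary: j)
  case 0 then show ?case by simp
next
  case (Suc n)
  show ?case
  proof (cases "j < length y")
    case True then show ?thesis by (simp add: nth_append)
  next
    case False
    then have "j - length y < n * length y" using Suc.prems by auto
    then have "concat (replicate n y) ! (j - length y) = y ! ((j - length y) mod length y)" using Suc.IH by blast
    moreover have "(j - length y) mod length y = j mod length y" using False by (simp add: le_mod_geq)
    ultimately show ?thesis using False by (simp add: nth_append)
  qed
qed

lemma per_mult: fixes F :: "nat \<Rightarrow> 'b" and e m :: nat assumes "\<forall>x. F (x + e) = F x" shows "F (x + e * m) = F x"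
proof (induction m)
  case 0 then show ?case by simp
next
  case (Suc m)
  have e1: "x + e * Suc m = (x + e*m) + e" by simp
  have "F (x + e * Suc m) = F ((x + e*m) + e)" by (simp only: e1)
  also have "\<dots> = F (x + e*m)" using assms by blast
  finally show ?case using Suc by simp
qed

lemma Fmod: assumes "\<forall>x. F x = F (x mod (q::nat))" "x mod q = y mod q" shows "F x = F y"
proof -
  have "F x = F (x mod q)" using assms(1) by blast
  also have "\<dots> = F (y mod q)" using assms(2) by simp
  also have "\<dots> = F y" using assms(1) by (rule_tac sym) blast
  finally show ?thesis .
qed

lemma shift_period:
  assumes q: "0 < q" and Fm: "\<forall>x. F x = F (x mod (q::nat))" and h: "\<forall>j. F (s + j + e) = F (s + j)"
  shows "F (x + e) = F x"
proof -
  have "F (x + e) = F ((x + e) + q*s)" by (rule Fmod[OF Fm]) simp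
  also have "(x + e) + q*s = s + (x + q*s - s) + e"
  proof -
    have "s \<le> q*s" using q by simp
    then show ?thesis by linarith
  qed
  also have "F (s + (x + q*s - s) + e) = F (s + (x + q*s - s))" using h by blast
  also have "s + (x + q*s - s) = x + q*s"
  proof -
    have "s \<le> q*s" using q by simp
    then show ?thesis by linarith
  qed
  also have "F (x + q*s) = F x" by (rule Fmod[OF Fm]) simp
  finally show ?thesis .
qed

lemma min_period:
  assumes v: "v \<noteq> []" "u = wpow v n"
    and minv: "\<And>v'. v' \<noteq> [] \<Longrightarrow> u = wpow v' n \<Longrightarrow> length v \<le> length v'"
    and per: "\<forall>x. F (x + e) = F x" and Fdef: "F = (\<lambda>x. v ! (x mod length v))"
  shows "length v dvd e"
proof (cases "e = 0")
  case True then show ?thesis by simp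
next
  case False
  define q where "q = length v"
  define g where "g = gcd e q"
  have q0: "0 < q" using v q_def by auto
  have g0: "0 < g" using g_def False by simp
  obtain X Y where XY: "e * X = q * Y + g" using bezout_nat[of e q] False g_def by blast
  have pg: "\<forall>x. F (x + g) = F x"
  proof
    fix x
    have "F (x + g) = F (x + g + q * Y)" unfolding Fdef q_def by simp
    also have "x + g + q * Y = x + e * X" using XY by simp
    also have "F (x + e * X) = F x" using per_mult[OF per] by blast
    finally show "F (x + g) = F x" .
  qed
  have gq: "g \<le> q" unfolding g_def using q0 by (simp add: gcd_le2_nat)
  define v' where "v' = take g v"
  have lv': "length v' = g" using gq q_def v'_def by simp
  have "wpow v' n = wpow v n"
  proof -
    have "v' ! (i mod g) = v ! (i mod q)" for i
    proof -
      have "v' ! (i mod g) = v ! (i mod g)" unfolding v'_def using g0 by simp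
      also have "\<dots> = F (i mod g)"
      proof -
        have "i mod g < q" using g0 gq by (meson order_less_le_trans mod_less_divisor)
        then show ?thesis unfolding Fdef q_def[symmetric] by simp
      qed
      also have "\<dots> = F (i mod g + g * (i div g))" using per_mult[OF pg, of "i mod g" "i div g"] by simp
      also have "\<dots> = F i" by simp
      finally show ?thesis unfolding Fdef q_def by simp
    qed
    then show ?thesis unfolding wpow_def lv' q_def by simp
  qed
  then have "q \<le> g" using minv[of v'] v lv' g0 q_def by auto
  then have "g = q" using gq by simp
  then show ?thesis unfolding q_def[symmetric] using g_def by (metis gcd_dvd1)
qed



lemma occ:
  assumes "\<forall>i<length u. u!i = F i" "u = X @ Y @ Z" "j < length Y"
  shows "Y!j = F (length X + j)"
proof -
  have "u ! (length X + j) = Y ! j" using assms(2,3) by (simp add: nth_append)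
  moreover have "length X + j < length u" using assms(2,3) by simp
  ultimately show ?thesis using assms(1) by metis
qed

lemma extend_eq:
  assumes q: "0 < q" and Fm: "\<forall>x. F x = F (x mod (q::nat))" and h: "\<forall>j<q. F (i + j) = F (i' + j)"
  shows "F (i + j) = F (i' + j)"
proof -
  have "F (i + j) = F (i + j mod q)" by (rule Fmod[OF Fm]) (simp add: mod_add_right_eq)
  also have "\<dots> = F (i' + j mod q)" using h q by simp
  also have "\<dots> = F (i' + j)" by (rule Fmod[OF Fm]) (simp add: mod_add_right_eq)
  finally show ?thesis .
qed

lemma occ_cong:
  assumes q: "0 < q" and Fm: "\<forall>x. F x = F (x mod (q::nat))"
    and minP: "\<And>e. \<forall>x. F (x + e) = F x \<Longrightarrow> q dvd e"
    and lY: "q \<le> length Y"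
    and o1: "\<forall>j<length Y. Y!j = F (i + j)" and o2: "\<forall>j<length Y. Y!j = F (i' + j)"
  shows "i mod q = i' mod q"
proof -
  have h: "\<forall>j<q. F (i + j) = F (i' + j)"
  proof (intro allI impI)
    fix j assume "j < q"
    then have jY: "j < length Y" using lY by simp
    have "Y!j = F (i + j)" using o1 jY by blast
    moreover have "Y!j = F (i' + j)" using o2 jY by blast
    ultimately show "F (i + j) = F (i' + j)" by simp
  qed
  have key: "i mod q = i' mod q" if le: "i \<le> i'" and hh: "\<forall>j<q. F (i + j) = F (i' + j)" for i i'
  proof -
    have sh: "\<forall>j. F (i + j + (i' - i)) = F (i + j)"
    proof
      fix j
      have e: "i + j + (i' - i) = i' + j" using le by simp
      have "F (i + j) = F (i' + j)" by (rule extend_eq[OF q Fm hh])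
      then show "F (i + j + (i' - i)) = F (i + j)" by (simp only: e)
    qed
    have "\<forall>x. F (x + (i' - i)) = F x"
    proof
      fix x show "F (x + (i' - i)) = F x" by (rule shift_period[OF q Fm sh])
    qed
    then have "q dvd (i' - i)" by (rule minP)
    then have "i' mod q = i mod q" using mod_eq_dvd_iff_nat[OF le] by simp
    then show ?thesis by simp
  qed
  show ?thesis
  proof (cases "i \<le> i'")
    case True then show ?thesis using key[OF True h] by simp
  next
    case False
    then have le: "i' \<le> i" by simp
    have h': "\<forall>j<q. F (i' + j) = F (i + j)" using h by simp
    show ?thesis using key[OF le h'] by simp
  qed
qed

lemma core:
  fixes F :: "nat \<Rightarrow> 'b" and h :: "'a \<Rightarrow> 'b list"
  assumes q: "0 < q" and Fm: "\<forall>x. F x = F (x mod q)"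
    and minP: "\<And>e. \<forall>x. F (x + e) = F x \<Longrightarrow> q dvd e"
    and uF: "\<forall>i<length (morph h w). morph h w ! i = F i"
    and inj: "inj (morph h)" and cd: "c \<noteq> d"
    and long: "q \<le> length (h c)"
    and w1: "w = p1 @ c # replicate g1 d @ c # s1"
    and w2: "w = p2 @ c # replicate g2 d @ c # s2" and g: "g1 < g2"
  shows False
proof -
  define \<alpha> where "\<alpha> = h c"
  define \<beta> where "\<beta> = h d"
  define u where "u = morph h w"
  have hne: "h x \<noteq> []" for x
  proof
    assume "h x = []"
    then have "morph h [x] = morph h []" by simp
    then have "[x] = []" by (rule injD[OF inj])
    then show False by simp
  qed
  have bne: "\<beta> \<noteq> []" using hne \<beta>_def by simp
  have uF': "\<forall>i<length u. u ! i = F i" using uF u_def by simp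
  define i1 where "i1 = length (morph h p1)"
  define i2 where "i2 = length (morph h p2)"
  have u1: "u = morph h p1 @ \<alpha> @ (concat (replicate g1 \<beta>) @ \<alpha> @ morph h s1)"
    using w1 u_def \<alpha>_def \<beta>_def by simp
  have u1': "u = (morph h p1 @ \<alpha> @ concat (replicate g1 \<beta>)) @ \<alpha> @ morph h s1"
    using w1 u_def \<alpha>_def \<beta>_def by simp
  have u2: "u = morph h p2 @ \<alpha> @ (concat (replicate g2 \<beta>) @ \<alpha> @ morph h s2)"
    using w2 u_def \<alpha>_def \<beta>_def by simp
  have u2': "u = (morph h p2 @ \<alpha> @ concat (replicate g2 \<beta>)) @ \<alpha> @ morph h s2"
    using w2 u_def \<alpha>_def \<beta>_def by simp
  have u2b: "u = (morph h p2 @ \<alpha>) @ concat (replicate g2 \<beta>) @ (\<alpha> @ morph h s2)"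
    using w2 u_def \<alpha>_def \<beta>_def by simp
  have lq: "q \<le> length \<alpha>" using long \<alpha>_def by simp
  have oa1: "\<forall>j<length \<alpha>. \<alpha>!j = F (i1 + j)" using occ[OF uF' u1] i1_def by blast
  have oa1': "\<forall>j<length \<alpha>. \<alpha>!j = F (i1 + length \<alpha> + g1 * length \<beta> + j)"
    using occ[OF uF' u1'] i1_def by (simp add: add.assoc)
  have oa2: "\<forall>j<length \<alpha>. \<alpha>!j = F (i2 + j)" using occ[OF uF' u2] i2_def by blast
  have oa2': "\<forall>j<length \<alpha>. \<alpha>!j = F (i2 + length \<alpha> + g2 * length \<beta> + j)"
    using occ[OF uF' u2'] i2_def by (simp add: add.assoc)
  define s0 where "s0 = i2 + length \<alpha>"
  have ob: "\<forall>j<g2 * length \<beta>. concat (replicate g2 \<beta>) ! j = F (s0 + j)"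
    using occ[OF uF' u2b] i2_def s0_def by simp
  have c1: "i1 mod q = (i1 + length \<alpha> + g1 * length \<beta>) mod q"
    using occ_cong[OF q Fm minP lq oa1 oa1'] .
  have c2: "i2 mod q = (i2 + length \<alpha> + g2 * length \<beta>) mod q"
    using occ_cong[OF q Fm minP lq oa2 oa2'] .
  have c12: "i1 mod q = i2 mod q" using occ_cong[OF q Fm minP lq oa1 oa2] .
  have d1: "q dvd length \<alpha> + g1 * length \<beta>"
  proof -
    have "q dvd (i1 + (length \<alpha> + g1 * length \<beta>)) - i1"
      using c1 mod_eq_dvd_iff_nat[where m="i1 + (length \<alpha> + g1 * length \<beta>)" and n=i1 and q=q]
      by (simp add: add.assoc)
    then show ?thesis by simp
  qed
  have d2: "q dvd length \<alpha> + g2 * length \<beta>"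
  proof -
    have "q dvd (i2 + (length \<alpha> + g2 * length \<beta>)) - i2"
      using c2 mod_eq_dvd_iff_nat[where m="i2 + (length \<alpha> + g2 * length \<beta>)" and n=i2 and q=q]
      by (simp add: add.assoc)
    then show ?thesis by simp
  qed
  define D where "D = (g2 - g1) * length \<beta>"
  have dD: "q dvd D"
  proof -
    have "(length \<alpha> + g2 * length \<beta>) - (length \<alpha> + g1 * length \<beta>) = D"
      unfolding D_def by (simp add: diff_mult_distrib)
    then show ?thesis using dvd_diff_nat[OF d2 d1] by simp
  qed
  have D0: "0 < D" unfolding D_def using g bne by simp
  have Dle: "D \<le> g2 * length \<beta>" unfolding D_def by (simp add: diff_mult_distrib)
  have FD: "\<forall>x. F (x + D) = F x"
  proof
    fix x
    obtain m where m: "D = q * m" using dD by blast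
    show "F (x + D) = F x" by (rule Fmod[OF Fm]) (simp add: m)
  qed
  have Fs0: "F (s0 + x) = \<beta> ! (x mod length \<beta>)" for x
  proof -
    have xl: "x mod D < g2 * length \<beta>" using D0 Dle by (meson mod_less_divisor order_less_le_trans)
    have "F (s0 + x) = F (s0 + x mod D + D * (x div D))"
      by (simp only: add.assoc mod_mult_div_eq)
    also have "\<dots> = F (s0 + x mod D)" using per_mult[OF FD] by blast
    also have "\<dots> = concat (replicate g2 \<beta>) ! (x mod D)"
      using ob xl by simp
    also have "\<dots> = \<beta> ! ((x mod D) mod length \<beta>)"
      using xl by (rule nth_concat_rep)
    also have "(x mod D) mod length \<beta> = x mod length \<beta>"
      unfolding D_def by (simp add: mod_mod_cancel)
    finally show ?thesis .
  qed
  have "\<forall>j. F (s0 + j + length \<beta>) = F (s0 + j)"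
    by (simp add: add.assoc Fs0)
  then have "\<forall>x. F (x + length \<beta>) = F x" using shift_period[OF q Fm] by (intro allI) blast
  then have qb: "q dvd length \<beta>" using minP by blast
  then have qa: "q dvd length \<alpha>" using d1 by (simp add: dvd_add_left_iff)
  have Fdv: "F (x + e) = F x" if dv: "q dvd e" for x e
  proof -
    obtain m where m: "e = q * m" using dv by blast
    show ?thesis by (rule Fmod[OF Fm]) (simp add: m)
  qed
  have Fa: "\<forall>x. F (x + length \<alpha>) = F x" using qa Fdv by blast
  have Fb: "\<forall>x. F (x + length \<beta>) = F x" using qb Fdv by blast
  define r where "r = i1 mod q"
  have Fr: "F (i + j) = F (r + j)" if "i mod q = r" for i j
    by (rule Fmod[OF Fm]) (metis mod_add_left_eq that)
  have Fa': "\<forall>j<length \<alpha>. \<alpha>!j = F (r + j)"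
  proof (intro allI impI)
    fix j assume "j < length \<alpha>"
    then have "\<alpha>!j = F (i1 + j)" using oa1 by blast
    also have "\<dots> = F (r + j)" by (rule Fr) (simp add: r_def)
    finally show "\<alpha>!j = F (r + j)" .
  qed
  have s0r: "s0 mod q = r"
  proof -
    obtain m where m: "length \<alpha> = q * m" using qa by blast
    have "s0 mod q = i2 mod q" unfolding s0_def m by simp
    then show ?thesis using c12 r_def by simp
  qed
  have Fb': "\<forall>j<length \<beta>. \<beta>!j = F (r + j)"
  proof (intro allI impI)
    fix j assume j: "j < length \<beta>"
    have "\<beta> ! j = \<beta> ! (j mod length \<beta>)" using j by simp
    also have "\<dots> = F (s0 + j)" using Fs0 by simp
    also have "\<dots> = F (r + j)" using Fr s0r by simp
    finally show "\<beta>!j = F (r + j)" .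
  qed
  have ab: "\<alpha> @ \<beta> = \<beta> @ \<alpha>"
  proof (rule nth_equalityI)
    show "length (\<alpha> @ \<beta>) = length (\<beta> @ \<alpha>)" by simp
    fix j assume "j < length (\<alpha> @ \<beta>)"
    then have j: "j < length \<alpha> + length \<beta>" by simp
    have L: "(\<alpha> @ \<beta>) ! j = F (r + j)"
    proof (cases "j < length \<alpha>")
      case True then show ?thesis using Fa' by (simp add: nth_append)
    next
      case False
      then have "(\<alpha> @ \<beta>) ! j = F (r + (j - length \<alpha>))" using Fb' j by (simp add: nth_append)
      also have "\<dots> = F (r + (j - length \<alpha>) + length \<alpha>)" using Fa by simp
      also have "r + (j - length \<alpha>) + length \<alpha> = r + j" using False by simp
      finally show ?thesis .
    qed
    have R: "(\<beta> @ \<alpha>) ! j = F (r + j)"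
    proof (cases "j < length \<beta>")
      case True then show ?thesis using Fb' by (simp add: nth_append)
    next
      case False
      then have "(\<beta> @ \<alpha>) ! j = F (r + (j - length \<beta>))" using Fa' j by (simp add: nth_append)
      also have "\<dots> = F (r + (j - length \<beta>) + length \<beta>)" using Fb by simp
      also have "r + (j - length \<beta>) + length \<beta> = r + j" using False by simp
      finally show ?thesis .
    qed
    show "(\<alpha> @ \<beta>) ! j = (\<beta> @ \<alpha>) ! j" using L R by simp
  qed
  have "morph h [c, d] = morph h [d, c]" using ab \<alpha>_def \<beta>_def by simp
  then have "[c, d] = [d, c]" using inj by (meson injD)
  then show False using cd by simp
qed



definition formw :: "'a \<Rightarrow> 'a \<Rightarrow> 'a list \<Rightarrow> bool" where
  "formw c d w \<longleftrightarrow> (\<exists>k j1 j2 j3. w = replicate j1 d @ concat (replicate k (c # replicate j2 d)) @ c # replicate j3 d)"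

lemma rep_c_start: "\<exists>R. concat (replicate k (c # Z)) @ c # Y = c # R"
  by (cases k) auto

lemma gaps_form:
  assumes "set w \<subseteq> {c,d}" "c \<in> set w"
    and "\<forall>p1 g1 s1 p2 g2 s2. w = p1 @ c # replicate g1 d @ c # s1 \<longrightarrow> w = p2 @ c # replicate g2 d @ c # s2 \<longrightarrow> g1 = g2"
  shows "formw c d w"
  using assms
proof (induction w)
  case Nil then show ?case by simp
next
  case (Cons x w')
  have sw: "set w' \<subseteq> {c,d}" using Cons.prems by simp
  have gw: "\<forall>p1 g1 s1 p2 g2 s2. w' = p1 @ c # replicate g1 d @ c # s1 \<longrightarrow> w' = p2 @ c # replicate g2 d @ c # s2 \<longrightarrow> g1 = g2"
  proof (intro allI impI)
    fix p1 g1 s1 p2 g2 s2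
    assume "w' = p1 @ c # replicate g1 d @ c # s1" "w' = p2 @ c # replicate g2 d @ c # s2"
    then have "x # w' = (x # p1) @ c # replicate g1 d @ c # s1" "x # w' = (x # p2) @ c # replicate g2 d @ c # s2" by simp_all
    then show "g1 = g2" using Cons.prems(3) by blast
  qed
  show ?case
  proof (cases "x = c")
    case False
    then have xd: "x = d" using Cons.prems(1) by simp
    have "c \<in> set w'" using False Cons.prems(2) by simp
    then obtain k j1 j2 j3 where w': "w' = replicate j1 d @ concat (replicate k (c # replicate j2 d)) @ c # replicate j3 d"
      using Cons.IH sw gw unfolding formw_def by blast
    have "x # w' = replicate (Suc j1) d @ concat (replicate k (c # replicate j2 d)) @ c # replicate j3 d"
      using w' xd by simp
    then show ?thesis unfolding formw_def by blast
  next
    case True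
    show ?thesis
    proof (cases "c \<in> set w'")
      case False
      then have "\<forall>y\<in>set w'. y = d" using sw by auto
      then have "w' = replicate (length w') d" by (simp add: replicate_length_same)
      then have "x # w' = replicate 0 d @ concat (replicate 0 (c # replicate 0 d)) @ c # replicate (length w') d"
        using True by simp
      then show ?thesis unfolding formw_def by blast
    next
      case cw: True
      then obtain k j1 j2 j3 where w': "w' = replicate j1 d @ concat (replicate k (c # replicate j2 d)) @ c # replicate j3 d"
        using Cons.IH sw gw unfolding formw_def by blast
      show ?thesis
      proof (cases k)
        case 0
        have "x # w' = replicate 0 d @ concat (replicate 1 (c # replicate j1 d)) @ c # replicate j3 d"
          using w' True 0 by simp
        then show ?thesis unfolding formw_def by blast
      next
        case (Suc k')
        obtain R where R: "concat (replicate k' (c # replicate j2 d)) @ c # replicate j3 d = c # R"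
          using rep_c_start[of k' c "replicate j2 d" "replicate j3 d"] by blast
        have e1: "x # w' = [] @ c # replicate j1 d @ c # (replicate j2 d @ c # R)"
          using w' True Suc R by simp
        have e2: "x # w' = (c # replicate j1 d) @ c # replicate j2 d @ c # R"
          using w' True Suc R by simp
        have "j1 = j2" using Cons.prems(3) e1 e2 by blast
        then have "x # w' = replicate 0 d @ concat (replicate (Suc k) (c # replicate j2 d)) @ c # replicate j3 d"
          using w' True by simp
        then show ?thesis unfolding formw_def by blast
      qed
    qed
  qed
qed

lemma core2:
  fixes F :: "nat \<Rightarrow> 'b" and h :: "'a \<Rightarrow> 'b list"
  assumes q: "0 < q" and Fm: "\<forall>x. F x = F (x mod q)"
    and minP: "\<And>e. \<forall>x. F (x + e) = F x \<Longrightarrow> q dvd e"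
    and uF: "\<forall>i<length (morph h w). morph h w ! i = F i"
    and inj: "inj (morph h)" and cd: "c \<noteq> d"
    and long: "q \<le> length (h c)"
    and sw: "set w \<subseteq> {c,d}" and wne: "w \<noteq> []" and nf1: "\<not> formw c d w" and nf2: "\<not> formw d c w"
  shows False
proof -
  have cw: "c \<in> set w"
  proof (rule ccontr)
    assume "c \<notin> set w"
    then have "\<forall>y\<in>set w. y = d" using sw by auto
    then have w: "w = replicate (length w) d" by (simp add: replicate_length_same)
    obtain n where n: "length w = Suc n" using wne by (cases w) auto
    have "w = replicate 0 c @ concat (replicate n (d # replicate 0 c)) @ d # replicate 0 c"
      using w n by (simp add: replicate_append_same)
    then show False using nf2 unfolding formw_def by blast
  qed
  obtain p1 g1 s1 p2 g2 s2 where w1: "w = p1 @ c # replicate g1 d @ c # s1"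
    and w2: "w = p2 @ c # replicate g2 d @ c # s2" and ne: "g1 \<noteq> g2"
    using gaps_form[OF sw cw] nf1 by blast
  show False
  proof (cases "g1 < g2")
    case True then show False using core[OF q Fm minP uF inj cd long w1 w2] by blast
  next
    case False then have "g2 < g1" using ne by simp
    then show False using core[OF q Fm minP uF inj cd long w2 w1] by blast
  qed
qed

lemma len_morph_le: "(\<forall>x\<in>set w. length (h x) \<le> B) \<Longrightarrow> length (morph h w) \<le> length w * B"
  by (induction w) auto

lemma core_all:
  fixes h :: "'a \<Rightarrow> 'b list"
  assumes inj: "inj (morph h)" and ab: "a \<noteq> b" and sw: "set w \<subseteq> {a,b}" and wne: "w \<noteq> []"
    and nf1: "\<not> formw a b w" and nf2: "\<not> formw b a w"
    and v: "v \<noteq> []" "morph h w = wpow v n" and big: "length w * length v < n"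
  shows False
proof -
  define u where "u = morph h w"
  define P where "P q \<longleftrightarrow> (\<exists>v'. v' \<noteq> [] \<and> length v' = q \<and> u = wpow v' n)" for q
  have Pv: "P (length v)" unfolding P_def u_def using v by blast
  define q where "q = (LEAST q. P q)"
  have Pq: "P q" unfolding q_def using Pv by (rule LeastI)
  have qmin: "q \<le> q'" if "P q'" for q' unfolding q_def using that by (rule Least_le)
  obtain v0 where v0: "v0 \<noteq> []" "length v0 = q" "u = wpow v0 n" using Pq P_def by blast
  have minv: "length v0 \<le> length v'" if "v' \<noteq> []" "u = wpow v' n" for v'
    using qmin[of "length v'"] that v0(2) unfolding P_def by blast
  have qv: "q \<le> length v" using qmin Pv by blast
  have q0: "0 < q" using v0 by auto
  define F where "F = (\<lambda>x. v0 ! (x mod q))"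
  have Fm: "\<forall>x. F x = F (x mod q)" unfolding F_def by simp
  have minP: "q dvd e" if "\<forall>x. F (x + e) = F x" for e
    using min_period[OF v0(1) v0(3) minv that] F_def v0(2) by simp
  have lu: "length u = n" using v0 by simp
  have uF: "\<forall>i<length (morph h w). morph h w ! i = F i"
    using v0 lu unfolding u_def F_def by (simp add: nth_wpow)
  have "\<exists>c\<in>{a,b}. q \<le> length (h c)"
  proof (rule ccontr)
    assume "\<not> ?thesis"
    then have "\<forall>x\<in>set w. length (h x) \<le> q - 1" using sw by force
    then have "length u \<le> length w * (q - 1)" unfolding u_def by (rule len_morph_le)
    also have "\<dots> \<le> length w * length v"
    proof (rule mult_le_mono2)
      show "q - 1 \<le> length v" using qv by simp
    qed
    finally show False using big lu by simp
  qed
  then have "q \<le> length (h a) \<or> q \<le> length (h b)" by auto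
  then show False
  proof
    assume "q \<le> length (h a)"
    then show False using core2[OF q0 Fm minP uF inj ab _ sw wne nf1 nf2] by blast
  next
    assume "q \<le> length (h b)"
    moreover have "set w \<subseteq> {b,a}" using sw by auto
    moreover have "b \<noteq> a" using ab by simp
    ultimately show False using core2[OF q0 Fm minP uF inj, of b a] wne nf1 nf2 by blast
  qed
qed

lemma bound:
  assumes ab: "a \<noteq> b" and sw: "set w \<subseteq> {a,b}" and wne: "w \<noteq> []" and nf1: "\<not> formw a b w" and nf2: "\<not> formw b a w"
  shows "exp_I (inj_morphs :: ('a \<Rightarrow> 'b list) set) w \<le> ereal (real (length w))"
  unfolding exp_I_def
proof (rule SUP_least)
  fix h :: "'a \<Rightarrow> 'b list" assume "h \<in> inj_morphs"
  then have inj: "inj (morph h)" by (simp add: inj_morphs_def)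
  show "word_exp (morph h w) \<le> ereal (real (length w))"
    unfolding word_exp_def
  proof (rule Sup_least)
    fix y assume "y \<in> {ereal (real_of_rat r) | r v p. v \<noteq> [] \<and> r = of_nat p / of_nat (length v) \<and> morph h w = wpow v p}"
    then obtain r v p where y: "y = ereal (real_of_rat r)" "v \<noteq> []" "r = of_nat p / of_nat (length v)" "morph h w = wpow v p"
      by blast
    have "\<not> length w * length v < p" using core_all[OF inj ab sw wne nf1 nf2 y(2) y(4)] by blast
    then have "real p \<le> real (length w) * real (length v)"
      by (metis not_less of_nat_le_iff of_nat_mult)
    then have "real p / real (length v) \<le> real (length w)" using y(2) by (simp add: divide_le_eq)
    then show "y \<le> ereal (real (length w))" using y by (simp add: of_rat_divide)
  qed
qed



lemma rot_rep: "X @ A = B @ X \<Longrightarrow> X @ concat (replicate n A) = concat (replicate n B) @ X"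
proof (induction n)
  case 0 then show ?case by simp
next
  case (Suc n)
  have "X @ concat (replicate (Suc n) A) = (X @ A) @ concat (replicate n A)" by simp
  also have "\<dots> = B @ (X @ concat (replicate n A))" using Suc.prems by simp
  also have "\<dots> = B @ concat (replicate n B) @ X" using Suc by simp
  finally show ?case by simp
qed

lemma prefix_inj:
  assumes ne: "\<And>x. f x \<noteq> []"
    and diff: "\<And>x y. x \<noteq> y \<Longrightarrow> \<exists>i. i < length (f x) \<and> i < length (f y) \<and> f x ! i \<noteq> f y ! i"
  shows "inj (morph f)"
proof (rule injI)
  fix xs ys assume "morph f xs = morph f ys" then show "xs = ys"
  proof (induction xs arbitrary: ys)
    case Nil then show ?case using ne by (cases ys) auto
  next
    case (Cons x xs)
    show ?case
    proof (cases ys)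
      case Nil then show ?thesis using Cons.prems ne by simp
    next
      case (Cons y ys')
      have eq: "f x @ morph f xs = f y @ morph f ys'" using Cons.prems Cons by simp
      have xy: "x = y"
      proof (rule ccontr)
        assume "x \<noteq> y"
        then obtain i where i: "i < length (f x)" "i < length (f y)" "f x ! i \<noteq> f y ! i" using diff by blast
        have "(f x @ morph f xs) ! i = f x ! i" using i by (simp add: nth_append)
        moreover have "(f y @ morph f ys') ! i = f y ! i" using i by (simp add: nth_append)
        ultimately show False using eq i by simp
      qed
      then have "morph f xs = morph f ys'" using eq by simp
      then show ?thesis using Cons.IH Cons xy by simp
    qed
  qed
qed

lemma conj_inj:
  assumes g: "inj (morph g)" and fg: "\<And>x. f x @ Z = Z @ g x"
  shows "inj (morph f)"
proof -
  have c: "morph f xs @ Z = Z @ morph g xs" for xs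
  proof (induction xs)
    case Nil then show ?case by simp
  next
    case (Cons x xs)
    have "morph f (x # xs) @ Z = f x @ (morph f xs @ Z)" by simp
    also have "\<dots> = (f x @ Z) @ morph g xs" using Cons by simp
    also have "\<dots> = Z @ g x @ morph g xs" using fg by simp
    finally show ?case by simp
  qed
  show ?thesis
  proof (rule injI)
    fix xs ys assume "morph f xs = morph f ys"
    then have "Z @ morph g xs = Z @ morph g ys" using c by metis
    then have "morph g xs = morph g ys" by simp
    then show "xs = ys" by (rule injD[OF g])
  qed
qed

lemma concat_rep_Suc': "concat (replicate (Suc n) x) = concat (replicate n x) @ x"
  by (induction n) auto

lemma concat_rep_mult: "concat (replicate k (concat (replicate n x))) = concat (replicate (k * n) x)"
  by (induction k) (auto simp: replicate_add)

lemma wpow_take: "r \<le> n * length v \<Longrightarrow> v \<noteq> [] \<Longrightarrow> wpow v r = take r (concat (replicate n v))"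
  by (rule nth_equalityI) (auto simp: nth_wpow nth_concat_rep)

lemma nth_code1: "(z1 # replicate m z0 @ z1 # r) ! Suc m = z1"
  by (simp add: nth_append)

lemma nth_code0: "m < m' \<Longrightarrow> (z1 # replicate m' z0 @ r) ! Suc m = z0"
  by (simp add: nth_append)

lemma gen_code:
  fixes g :: "'a \<Rightarrow> 'b list"
  assumes z: "z0 \<noteq> z1" and gb: "g b = [z0]"
    and go: "\<And>x. x \<noteq> b \<Longrightarrow> g x = z1 # replicate (M x) z0 @ z1 # R x"
    and Minj: "\<And>x y. x \<noteq> b \<Longrightarrow> y \<noteq> b \<Longrightarrow> x \<noteq> y \<Longrightarrow> M x \<noteq> M y"
  shows "inj (morph g)"
proof (rule prefix_inj)
  fix x show "g x \<noteq> []" using gb go by (cases "x = b") auto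
next
  have key: "\<exists>i. i < length (g x) \<and> i < length (g y) \<and> g x ! i \<noteq> g y ! i"
    if "x \<noteq> b" "y \<noteq> b" "M x < M y" for x y
  proof -
    have "g x ! Suc (M x) = z1" using go[OF that(1)] nth_code1 by metis
    moreover have "g y ! Suc (M x) = z0" using go[OF that(2)] nth_code0[OF that(3)] by metis
    moreover have "Suc (M x) < length (g x)" using go[OF that(1)] by simp
    moreover have "Suc (M x) < length (g y)" using go[OF that(2)] that(3) by simp
    ultimately show ?thesis using z by metis
  qed
  fix x y :: 'a assume xy: "x \<noteq> y"
  show "\<exists>i. i < length (g x) \<and> i < length (g y) \<and> g x ! i \<noteq> g y ! i"
  proof (cases "x = b")
    case True
    then have "y \<noteq> b" using xy by simp
    then show ?thesis using True gb go[of y] z by (intro exI[of _ 0]) auto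
  next
    case xb: False
    show ?thesis
    proof (cases "y = b")
      case True
      then show ?thesis using xb gb go[of x] z by (intro exI[of _ 0]) auto
    next
      case yb: False
      have "M x \<noteq> M y" using Minj xb yb xy by blast
      then consider "M x < M y" | "M y < M x" by linarith
      then show ?thesis
      proof cases
        case 1 then show ?thesis using key xb yb by blast
      next
        case 2 then show ?thesis using key[OF yb xb] by metis
      qed
    qed
  qed
qed



lemma take_tail: "take (2*c+1) (concat (replicate 2 (replicate c z0 @ z1 # replicate j2 z0)))
   = replicate c z0 @ z1 # replicate c z0"
proof -
  have "concat (replicate 2 (replicate c z0 @ z1 # replicate j2 z0))
     = replicate c z0 @ z1 # (replicate (j2 + c) z0 @ z1 # replicate j2 z0)"
    by (simp add: numeral_2_eq_2 replicate_add)
  moreover have "take c (replicate (j2 + c) z0 @ X) = replicate c z0" for X :: "'a list"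
    by (simp add: take_append min_def)
  ultimately show ?thesis by (simp add: take_append)
qed

lemma inf_case:
  fixes a b :: "'a::finite"
  assumes card: "card (UNIV :: 'b::finite set) \<ge> 2" and ab: "a \<noteq> b"
    and w: "w = replicate j1 b @ concat (replicate k (a # replicate j2 b)) @ a # replicate j3 b"
  shows "exp_I (inj_morphs :: ('a \<Rightarrow> 'b list) set) w = \<infinity>"
proof -
  have "\<not> card (UNIV :: 'b set) \<le> Suc 0" using card by simp
  then have "\<not> (\<forall>x\<in>(UNIV :: 'b set). \<forall>y\<in>UNIV. x = y)" using card_le_Suc0_iff_eq[OF finite_UNIV] by blast
  then obtain z0 z1 :: 'b where z: "z0 \<noteq> z1" by blast
  obtain idx :: "'a \<Rightarrow> nat" and nn where "idx ` UNIV = {i. i < nn}" "inj_on idx UNIV"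
    using finite_imp_inj_to_nat_seg[OF finite_UNIV] by blast
  then have idx: "inj idx" by simp
  have main: "ereal (real N) \<le> exp_I (inj_morphs :: ('a \<Rightarrow> 'b list) set) w" if N1: "1 \<le> N" for N
  proof -
    define L where "L = j2 + j1 + j3"
    define c where "c = j1 + j3"
    define S where "S = replicate j3 z0 @ z1 # replicate (j2 + j1) z0"
    define T where "T = replicate c z0 @ z1 # replicate j2 z0"
    define \<alpha> where "\<alpha> = concat (replicate N S) @ replicate j3 z0 @ z1 # replicate j1 z0"
    define f where "f x = (if x = b then [z0] else if x = a then \<alpha>
        else replicate j3 z0 @ z1 # replicate (L + 1 + idx x) z0 @ [z1])" for x
    define M where "M x = (if x = a then L else L + 1 + idx x)" for x
    define R where "R x = (if x = a then tl (concat (replicate (N - 1) (z1 # replicate L z0)) @ z1 # replicate (j1 + j3) z0)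
        else replicate j3 z0)" for x
    define g where "g x = (if x = b then [z0] else z1 # replicate (M x) z0 @ z1 # R x)" for x
    have rotS: "replicate j3 z0 @ (z1 # replicate L z0) = S @ replicate j3 z0"
      by (simp add: S_def L_def replicate_add)
    have ga: "g a = concat (replicate N (z1 # replicate L z0)) @ z1 # replicate (j1 + j3) z0"
    proof -
      obtain N' where N': "N = Suc N'" using N1 by (cases N) auto
      obtain R' where R': "concat (replicate N' (z1 # replicate L z0)) @ z1 # replicate (j1 + j3) z0 = z1 # R'"
        using rep_c_start[of N' z1 "replicate L z0" "replicate (j1 + j3) z0"] by blast
      show ?thesis using ab R' unfolding g_def M_def R_def N' by simp
    qed
    have fg: "f x @ replicate j3 z0 = replicate j3 z0 @ g x" for x
    proof (cases "x = b")
      case True then show ?thesis by (simp add: f_def g_def replicate_append_same)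
    next
      case xb: False
      show ?thesis
      proof (cases "x = a")
        case True
        have "replicate j3 z0 @ g x = (replicate j3 z0 @ concat (replicate N (z1 # replicate L z0))) @ z1 # replicate (j1 + j3) z0"
          using ga True by simp
        also have "\<dots> = concat (replicate N S) @ replicate j3 z0 @ z1 # replicate (j1 + j3) z0"
          using rot_rep[OF rotS] by simp
        also have "\<dots> = f x @ replicate j3 z0"
          using True ab by (simp add: f_def \<alpha>_def replicate_add)
        finally show ?thesis by simp
      next
        case False
        then show ?thesis using xb by (simp add: f_def g_def M_def R_def)
      qed
    qed
    have ginj: "inj (morph g)"
    proof (rule gen_code[where b=b and M=M and R=R])
      show "z0 \<noteq> z1" by (rule z)
      show "g b = [z0]" by (simp add: g_def)
      show "g x = z1 # replicate (M x) z0 @ z1 # R x" if "x \<noteq> b" for x using that by (simp add: g_def)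
      show "M x \<noteq> M y" if "x \<noteq> b" "y \<noteq> b" "x \<noteq> y" for x y
        using that idx unfolding M_def by (auto dest: injD)
    qed
    have finj: "inj (morph f)" using conj_inj[OF ginj fg] .
    then have fI: "f \<in> inj_morphs" by (simp add: inj_morphs_def)
    define m where "m = k * Suc N + N"
    have fa: "f a = \<alpha>" using ab by (simp add: f_def)
    have fb: "f b = [z0]" by (simp add: f_def)
    have u0: "morph f w = replicate j1 z0 @ concat (replicate k (\<alpha> @ replicate j2 z0)) @ \<alpha> @ replicate j3 z0"
      using w fa fb by simp
    have aS: "\<alpha> @ replicate j2 z0 = concat (replicate (Suc N) S)"
    proof -
      have "replicate j1 z0 @ replicate j2 z0 = replicate (j2 + j1) z0"
        by (simp add: replicate_add[symmetric] add.commute)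
      then show ?thesis unfolding concat_rep_Suc' \<alpha>_def S_def by simp
    qed
    have rotT: "replicate j1 z0 @ S = T @ replicate j1 z0"
      by (simp add: S_def T_def c_def replicate_add)
    have "morph f w = replicate j1 z0 @ concat (replicate (k * Suc N) S) @ concat (replicate N S)
        @ replicate j3 z0 @ z1 # replicate j1 z0 @ replicate j3 z0"
      unfolding u0 aS concat_rep_mult by (simp add: \<alpha>_def)
    also have "\<dots> = (replicate j1 z0 @ concat (replicate m S)) @ replicate j3 z0 @ z1 # replicate j1 z0 @ replicate j3 z0"
      by (simp add: m_def replicate_add)
    also have "\<dots> = concat (replicate m T) @ replicate j1 z0 @ replicate j3 z0 @ z1 # replicate j1 z0 @ replicate j3 z0"
      using rot_rep[OF rotT] by simp
    also have "\<dots> = concat (replicate m T) @ replicate c z0 @ z1 # replicate c z0"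
      by (simp add: c_def replicate_add)
    finally have u1: "morph f w = concat (replicate m T) @ replicate c z0 @ z1 # replicate c z0" .
    have lT: "length T = c + 1 + j2" by (simp add: T_def)
    have Tne: "T \<noteq> []" by (simp add: T_def)
    define n where "n = length (morph f w)"
    have ln: "n = m * length T + (2 * c + 1)" unfolding n_def u1 by simp
    have wp: "morph f w = wpow T n"
    proof -
      have "wpow T n = take n (concat (replicate (m + 2) T))"
        by (rule wpow_take) (simp_all add: ln lT Tne)
      also have "\<dots> = concat (replicate m T) @ take (2 * c + 1) (concat (replicate 2 T))"
      proof -
        have "replicate (m + 2) T = replicate m T @ replicate 2 T" by (rule replicate_add)
        then have "concat (replicate (m + 2) T) = concat (replicate m T) @ concat (replicate 2 T)" by simp
        moreover have "n - length (concat (replicate m T)) = 2 * c + 1" by (simp add: ln)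
        moreover have "length (concat (replicate m T)) \<le> n" by (simp add: ln)
        ultimately show ?thesis by (simp add: take_append)
      qed
      also have "\<dots> = morph f w" unfolding u1 T_def by (simp only: take_tail)
      finally show ?thesis by simp
    qed
    have "ereal (real_of_rat (of_nat n / of_nat (length T))) \<le> word_exp (morph f w)"
      unfolding word_exp_def by (rule Sup_upper) (use wp Tne in blast)
    moreover have "real N \<le> real_of_rat (of_nat n / of_nat (length T))"
    proof -
      have "real_of_rat (of_nat n / of_nat (length T)) = real n / real (length T)"
        by (simp add: of_rat_divide)
      moreover have "real N * real (length T) \<le> real n"
      proof -
        have "N \<le> m" unfolding m_def by simp
        then have "N * length T \<le> m * length T" by (rule mult_le_mono1)
        then have "N * length T \<le> n" unfolding ln by linarith
        then show ?thesis by (metis of_nat_le_iff of_nat_mult)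
      qed
      ultimately show ?thesis using Tne by (simp add: le_divide_eq)
    qed
    moreover have "word_exp (morph f w) \<le> exp_I (inj_morphs :: ('a \<Rightarrow> 'b list) set) w"
      unfolding exp_I_def using fI by (rule SUP_upper)
    ultimately show ?thesis by (meson ereal_less_eq(3) order_trans)
  qed
  show ?thesis
  proof (rule ccontr)
    assume "exp_I (inj_morphs :: ('a \<Rightarrow> 'b list) set) w \<noteq> \<infinity>"
    then obtain n :: nat where n: "exp_I (inj_morphs :: ('a \<Rightarrow> 'b list) set) w < ereal (real n)"
      using less_PInf_Ex_of_nat by blast
    have "ereal (real (max n 1)) \<le> exp_I (inj_morphs :: ('a \<Rightarrow> 'b list) set) w" using main by simp
    moreover have "ereal (real n) \<le> ereal (real (max n 1))" by simp
    ultimately have "ereal (real n) \<le> exp_I (inj_morphs :: ('a \<Rightarrow> 'b list) set) w" by (metis order_trans)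
    then show False using n by simp
  qed
qed


theorem corollary10:
  fixes a b :: "'a::finite" and w :: "'a list"
  assumes "card (UNIV :: 'a set) \<ge> 2" and "card (UNIV :: 'b::finite set) \<ge> 2"
    and "a \<noteq> b"
    and "w \<noteq> []" and "set w \<subseteq> {a, b}"
  shows "(exp_I (inj_morphs :: ('a \<Rightarrow> 'b list) set) w = \<infinity>
            \<longleftrightarrow> exp_I (inj_morphs :: ('a \<Rightarrow> 'b list) set) w > ereal (real (length w)))
       \<and> (exp_I (inj_morphs :: ('a \<Rightarrow> 'b list) set) w > ereal (real (length w))
            \<longleftrightarrow> (\<exists>k j1 j2 j3 :: nat.
                   w = replicate j1 b @ concat (replicate k (a # replicate j2 b)) @ a # replicate j3 b
                 \<or> w = replicate j1 a @ concat (replicate k (b # replicate j2 a)) @ b # replicate j3 a))"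
proof -
  have iff3: "(\<exists>k j1 j2 j3 :: nat.
                   w = replicate j1 b @ concat (replicate k (a # replicate j2 b)) @ a # replicate j3 b
                 \<or> w = replicate j1 a @ concat (replicate k (b # replicate j2 a)) @ b # replicate j3 a)
       \<longleftrightarrow> formw a b w \<or> formw b a w" unfolding formw_def by blast
  show ?thesis
  proof (cases "formw a b w \<or> formw b a w")
    case True
    have inf: "exp_I (inj_morphs :: ('a \<Rightarrow> 'b list) set) w = \<infinity>"
      using True
    proof
      assume "formw a b w"
      then obtain k j1 j2 j3 where "w = replicate j1 b @ concat (replicate k (a # replicate j2 b)) @ a # replicate j3 b"
        unfolding formw_def by blast
      then show ?thesis using inf_case[OF assms(2) assms(3)] by blast
    next
      assume "formw b a w"
      then obtain k j1 j2 j3 where "w = replicate j1 a @ concat (replicate k (b # replicate j2 a)) @ b # replicate j3 a"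
        unfolding formw_def by blast
      moreover have "b \<noteq> a" using assms(3) by simp
      ultimately show ?thesis using inf_case[OF assms(2)] by blast
    qed
    show ?thesis using True iff3 inf by simp
  next
    case False
    then have le: "exp_I (inj_morphs :: ('a \<Rightarrow> 'b list) set) w \<le> ereal (real (length w))"
      using bound[OF assms(3) assms(5) assms(4)] by blast
    then have "exp_I (inj_morphs :: ('a \<Rightarrow> 'b list) set) w \<noteq> \<infinity>" by auto
    then show ?thesis using False iff3 le by auto
  qed
qed

end
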